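(* Let $(X,d)$ be a compact metric space and let $f_1,f_2:X\to X$ be continuous. Suppose there is $c\in X$ with $f_1(x)=c$ for all $x\in X$, $f_2(c)=c$, and $f_2$ is accessible. Then the multiple mapping $F=\{f_1,f_2\}$ is (Hausdorff metric) accessible.
   Context: For the multiple mapping $F=\{f_1,f_2\}$ and $n\ge 1$, $F^n(x)=\{f_{i_1}f_{i_2}\cdots f_{i_n}(x)\mid i_1,\dots,i_n\in\{1,2\}\}$. The Hausdorff metric on nonempty compact subsets is $d_H(A,B)=\max\{\sup_{a\in A}\inf_{b\in B}d(a,b),\sup_{b\in B}\inf_{a\in A}d(a,b)\}$. $F$ is (Hausdorff metric) accessible if for every $\epsilon>0$ and all nonempty open $U,V\subset X$ there exist $x\in U$, $y\in V$ and $n\in\mathbb{Z}^+$ with $d_H(F^n(x),F^n(y))<\epsilon$. A continuous $f:X\to X$ is accessible if for every $\epsilon>0$ and all nonempty open $U,V\subset X$ there exist $x\in U$, $y\in V$ and $n\in\mathbb{Z}^+$ with $d(f^n(x),f^n(y))<\epsilon$. Here $\mathbb{Z}^+=\{1,2,\dots\}$. *)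

theory Defs
  imports "HOL-Analysis.Analysis"
begin

definition hdist :: "'a::metric_space set \<Rightarrow> 'a set \<Rightarrow> real" where
  "hdist A B = max (SUP a\<in>A. INF b\<in>B. dist a b) (SUP b\<in>B. INF a\<in>A. dist a b)"

text \<open>F^n(x) for the multiple mapping F = {f1, f2}: all compositions
  f_{i_1} o ... o f_{i_n} applied to x, indices i_k in {1,2}.\<close>
definition multi_iter :: "('a \<Rightarrow> 'a) \<Rightarrow> ('a \<Rightarrow> 'a) \<Rightarrow> nat \<Rightarrow> 'a \<Rightarrow> 'a set" where
  "multi_iter f1 f2 n x =
     {foldr (\<lambda>i y. (if i = (1::nat) then f1 else f2) y) is x | is.
        length is = n \<and> set is \<subseteq> {1, 2}}"

definition accessible_map :: "'a::metric_space set \<Rightarrow> ('a \<Rightarrow> 'a) \<Rightarrow> bool" where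
  "accessible_map X f \<longleftrightarrow>
     (\<forall>\<epsilon>>0. \<forall>U V. openin (top_of_set X) U \<and> U \<noteq> {} \<and> openin (top_of_set X) V \<and> V \<noteq> {} \<longrightarrow>
        (\<exists>x\<in>U. \<exists>y\<in>V. \<exists>n\<ge>1. dist ((f ^^ n) x) ((f ^^ n) y) < \<epsilon>))"

definition accessible_multi :: "'a::metric_space set \<Rightarrow> ('a \<Rightarrow> 'a) \<Rightarrow> ('a \<Rightarrow> 'a) \<Rightarrow> bool" where
  "accessible_multi X f1 f2 \<longleftrightarrow>
     (\<forall>\<epsilon>>0. \<forall>U V. openin (top_of_set X) U \<and> U \<noteq> {} \<and> openin (top_of_set X) V \<and> V \<noteq> {} \<longrightarrow>
        (\<exists>x\<in>U. \<exists>y\<in>V. \<exists>n\<ge>1. hdist (multi_iter f1 f2 n x) (multi_iter f1 f2 n y) < \<epsilon>))"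

end

theory Submission
  imports Defs
begin

lemma hd_le: fixes c a b :: "'a::metric_space"
  shows "hdist {c,a} {c,b} \<le> dist a b"
proof -
  have 1: "(SUP a'\<in>{c,a}. INF b'\<in>{c,b}. dist a' b') \<le> dist a b"
    by (simp add: dist_commute Inf_insert_finite Sup_insert_finite)
  have 2: "(SUP b'\<in>{c,b}. INF a'\<in>{c,a}. dist a' b') \<le> dist a b"
    by (simp add: dist_commute Inf_insert_finite Sup_insert_finite)
  show ?thesis unfolding hdist_def using 1 2 by simp
qed

lemma foldr_val:
  assumes "\<forall>x\<in>X. f1 x = c" "f2 c = c" "f2 ` X \<subseteq> X" "c \<in> X" "x \<in> X"
  shows "set is \<subseteq> {1,2} \<Longrightarrow> foldr (\<lambda>i y. (if i = (1::nat) then f1 else f2) y) is x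
     = (if 1 \<in> set is then c else (f2 ^^ length is) x)"
proof (induction "is")
  case Nil
  then show ?case by simp
next
  case (Cons i js)
  have mem: "\<And>n. (f2 ^^ n) x \<in> X"
  proof -
    fix n show "(f2 ^^ n) x \<in> X" by (induction n) (use assms in auto)
  qed
  have IH: "foldr (\<lambda>i y. (if i = (1::nat) then f1 else f2) y) js x
     = (if 1 \<in> set js then c else (f2 ^^ length js) x)" using Cons by auto
  show ?case
  proof (cases "i = 1")
    case True
    then show ?thesis using IH assms mem by auto
  next
    case False
    then show ?thesis using IH assms by auto
  qed
qed

lemma multi_iter_eq:
  assumes "\<forall>x\<in>X. f1 x = c" "f2 c = c" "f2 ` X \<subseteq> X" "c \<in> X" "x \<in> X" "n \<ge> 1"
  shows "multi_iter f1 f2 n x = {c, (f2 ^^ n) x}"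
proof
  show "multi_iter f1 f2 n x \<subseteq> {c, (f2 ^^ n) x}"
    unfolding multi_iter_def using foldr_val[OF assms(1-5)] by auto
next
  have a: "c \<in> multi_iter f1 f2 n x"
  proof -
    let ?l = "1 # replicate (n - 1) (2::nat)"
    have "length ?l = n" "set ?l \<subseteq> {1,2}" using assms(6) by auto
    moreover have "foldr (\<lambda>i y. (if i = (1::nat) then f1 else f2) y) ?l x = c"
      using foldr_val[OF assms(1-5), of ?l] by (simp add: subset_iff)
    ultimately show ?thesis unfolding multi_iter_def by (intro CollectI exI[of _ ?l]) auto
  qed
  have b: "(f2 ^^ n) x \<in> multi_iter f1 f2 n x"
  proof -
    let ?l = "replicate n (2::nat)"
    have "length ?l = n" "set ?l \<subseteq> {1,2}" by auto
    moreover have "foldr (\<lambda>i y. (if i = (1::nat) then f1 else f2) y) ?l x = (f2 ^^ n) x"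
      using foldr_val[OF assms(1-5), of ?l] by auto
    ultimately show ?thesis unfolding multi_iter_def by (intro CollectI exI[of _ ?l]) auto
  qed
  show "{c, (f2 ^^ n) x} \<subseteq> multi_iter f1 f2 n x" using a b by auto
qed

theorem theorem3p8:
  fixes X :: "'a::metric_space set" and f1 f2 :: "'a \<Rightarrow> 'a" and c :: 'a
  assumes "compact X"
    and "continuous_on X f1" and "f1 ` X \<subseteq> X"
    and "continuous_on X f2" and "f2 ` X \<subseteq> X"
    and "c \<in> X" and "\<forall>x\<in>X. f1 x = c" and "f2 c = c"
    and "accessible_map X f2"
  shows "accessible_multi X f1 f2"
  unfolding accessible_multi_def
proof (intro allI impI)
  fix e :: real and U V
  assume e: "e > 0" and UV: "openin (top_of_set X) U \<and> U \<noteq> {} \<and> openin (top_of_set X) V \<and> V \<noteq> {}"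
  then obtain x y n where xy: "x \<in> U" "y \<in> V" "n \<ge> 1" and d: "dist ((f2 ^^ n) x) ((f2 ^^ n) y) < e"
    using assms(9) unfolding accessible_map_def by blast
  have "x \<in> X" "y \<in> X" using UV xy openin_imp_subset by blast+
  then have "hdist (multi_iter f1 f2 n x) (multi_iter f1 f2 n y) < e"
    using multi_iter_eq[OF assms(7,8,5,6)] xy d hd_le[of c] by (smt (verit))
  then show "\<exists>x\<in>U. \<exists>y\<in>V. \<exists>n\<ge>1. hdist (multi_iter f1 f2 n x) (multi_iter f1 f2 n y) < e"
    using xy by blast
qed

end
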